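(* Consider the normalised two-player, two-market Cournot game with per-period utility $u(x,a)=-2x(x+a)$ for a player playing $x$ against an opponent playing $a$. Let $a_0\neq 0$ be the opponent's strategy at time $0$. Suppose the moving player responds with $c\,a_0$ for some $c\in\mathbb{R}$, and that the opponent, facing the same problem by symmetry, responds at the next step with $c\cdot(c\,a_0)=c^2a_0$. Let $$U_2(c)=u(c\,a_0,a_0)+u(c\,a_0,c^2a_0)$$ be the moving player's total utility over a time horizon of two steps. Then the critical points of $U_2$ on $\mathbb{R}$ are exactly $c=-1$ and $c=-\tfrac13$, and $c=-\tfrac13$ is the unique local maximiser of $U_2$; that is, the optimal response for a time horizon of two moves is $-\frac{a_0}{3}$.
   Context: Two players each have one unit of a homogeneous good (zero production and transportation cost) to split between two markets with inverse-linear demand. A player's strategy is normalised to a number in $[-1,1]$ with $0$ the unique Cournot equilibrium split; the normalised one-period utility (relative to equilibrium) of a player playing $x$ against an opponent playing $a$ is $u(x,a)=-2x(x+a)$. Players update their strategies alternately, each time responding to the opponent's current strategy. *)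

theory Defs
  imports Complex_Main
begin

definition u :: "real \<Rightarrow> real \<Rightarrow> real" where
  "u x a = -2 * x * (x + a)"

definition U2 :: "real \<Rightarrow> real \<Rightarrow> real" where
  "U2 a0 c = u (c * a0) a0 + u (c * a0) (c^2 * a0)"

definition is_local_max :: "(real \<Rightarrow> real) \<Rightarrow> real \<Rightarrow> bool" where
  "is_local_max f c \<longleftrightarrow> (\<exists>e>0. \<forall>y. \<bar>y - c\<bar> < e \<longrightarrow> f y \<le> f c)"

end

theory Submission
  imports Defs
begin

lemma U2_eq: "U2 a0 c = -2 * a0^2 * (c^3 + 2*c^2 + c)"
  unfolding U2_def u_def by (simp add: algebra_simps power2_eq_square power3_eq_cube)

lemma U2_deriv: "(U2 a0 has_real_derivative (-2 * a0^2 * (3*c^2 + 4*c + 1))) (at c)"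
proof -
  have "((\<lambda>c. -2 * a0^2 * (c^3 + 2*c^2 + c)) has_real_derivative
        (-2 * a0^2 * (3*c^2 + 4*c + 1))) (at c)"
    by (auto intro!: derivative_eq_intros simp: algebra_simps power2_eq_square)
  moreover have "U2 a0 = (\<lambda>c. -2 * a0^2 * (c^3 + 2*c^2 + c))" using U2_eq[of a0] by (simp add: fun_eq_iff)
  ultimately show ?thesis by simp
qed

theorem theorem2:
  fixes a0 :: real
  assumes "a0 \<noteq> 0"
  shows "{c. (U2 a0 has_real_derivative 0) (at c)} = {-1, -1/3}
         \<and> {c. is_local_max (U2 a0) c} = {-1/3}"
proof -
  have k: "a0^2 > 0" using assms by simp
  have crit: "(U2 a0 has_real_derivative 0) (at c) \<longleftrightarrow> c = -1 \<or> c = -1/3" for c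
  proof -
    have "(U2 a0 has_real_derivative 0) (at c) \<longleftrightarrow> -2 * a0^2 * (3*c^2 + 4*c + 1) = 0"
      using U2_deriv[of a0 c] DERIV_unique by metis
    also have "\<dots> \<longleftrightarrow> (3*c+1)*(c+1) = 0"
    proof -
      have "-2 * a0^2 * (3*c^2 + 4*c + 1) = (-2 * a0^2) * ((3*c+1)*(c+1))" by (simp add: algebra_simps power2_eq_square)
      moreover have "-2 * a0^2 \<noteq> 0" using k by simp
      ultimately show ?thesis by simp
    qed
    also have "\<dots> \<longleftrightarrow> c = -1 \<or> c = -1/3"
      by (simp only: mult_eq_0_iff) (auto simp: field_simps)
    finally show ?thesis .
  qed
  have lm1: "is_local_max (U2 a0) (-1/3)"
    unfolding is_local_max_def
  proof (intro exI[of _ 1] conjI allI impI)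
    fix y :: real assume "\<bar>y - -1/3\<bar> < 1"
    hence "y + 4/3 \<ge> 0" by simp
    hence "(y+1/3)^2 * (y+4/3) \<ge> 0" by simp
    hence "y^3 + 2*y^2 + y + 4/27 \<ge> 0" by (simp add: algebra_simps power2_eq_square power3_eq_cube)
    hence "-2 * a0^2 * (y^3 + 2*y^2 + y) \<le> -2 * a0^2 * (-4/27)"
    proof -
      have "0 \<le> a0^2 * (y^3 + 2*y^2 + y + 4/27)" using k \<open>y^3 + 2*y^2 + y + 4/27 \<ge> 0\<close> by simp
      thus ?thesis by (simp add: algebra_simps)
    qed
    thus "U2 a0 y \<le> U2 a0 (-1/3)" by (simp add: U2_eq power3_eq_cube power2_eq_square)
  qed simp
  have nlm: "\<not> is_local_max (U2 a0) (-1)"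
  proof
    assume "is_local_max (U2 a0) (-1)"
    then obtain e where e: "e > 0" "\<And>y. \<bar>y - -1\<bar> < e \<Longrightarrow> U2 a0 y \<le> U2 a0 (-1)"
      unfolding is_local_max_def by blast
    define y where "y = -1 + min e 1 / 2"
    have y1: "y < 0" "y + 1 > 0" "\<bar>y - -1\<bar> < e" using e(1) by (auto simp: y_def)
    have "(-y) * (y+1)^2 > 0" using y1 by (intro mult_pos_pos) auto
    hence "-2 * a0^2 * (y^3 + 2*y^2 + y) > 0"
    proof -
      have "0 < a0^2 * ((-y) * (y+1)^2)" using k \<open>(-y) * (y+1)^2 > 0\<close> by (rule mult_pos_pos)
      thus ?thesis by (simp add: algebra_simps power2_eq_square power3_eq_cube)
    qed
    moreover have "U2 a0 (-1) = 0" by (simp add: U2_eq)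
    ultimately show False using e(2)[OF y1(3)] by (simp add: U2_eq)
  qed
  have "is_local_max (U2 a0) c \<Longrightarrow> (U2 a0 has_real_derivative 0) (at c)" for c
  proof -
    assume "is_local_max (U2 a0) c"
    then obtain e where e: "e > 0" "\<And>y. \<bar>c - y\<bar> < e \<Longrightarrow> U2 a0 y \<le> U2 a0 c"
      unfolding is_local_max_def by (metis abs_minus_commute)
    have "-2 * a0^2 * (3*c^2 + 4*c + 1) = 0"
      using DERIV_local_max[OF U2_deriv e(1)] e(2) dist_real_def by metis
    thus ?thesis using U2_deriv[of a0 c] by metis
  qed
  hence "{c. is_local_max (U2 a0) c} = {-1/3}" using crit lm1 nlm by auto
  moreover have "{c. (U2 a0 has_real_derivative 0) (at c)} = {-1, -1/3}" using crit by auto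
  ultimately show ?thesis by simp
qed

end
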